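(* For the boundary Markov chain $(M_n)$ started from any fixed initial state, almost surely \[ \limsup_{n\to\infty} \frac{M_n}{n^{2/3}\log n} < \infty . \]
   Context: The boundary Markov chain is the Markov chain $(M_n)_{n\ge0}$ on $\{0,1,2,\dots\}$ with $M_{n+1}=M_n+X_n$. Given $M_n=m$, its step $X_n$ has the law \[ \mathbb P(X_n=1\mid M_n=m)=\frac{2m+3}{3m+3}. \] For $1\le k\le m$, \[ \mathbb P(X_n=-k\mid M_n=m)=\frac{2(2k-2)!}{(k-1)!(k+1)!}\cdot\frac{m!^2(2m-2k+1)!}{(m-k)!^2(2m+1)!}. \] *)

theory Defs
  imports "HOL-Probability.Probability"
begin

definition step_prob :: "nat \<Rightarrow> int \<Rightarrow> real" where
  "step_prob m x =
    (if x = 1 then (2 * real m + 3) / (3 * real m + 3)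
     else if - int m \<le> x \<and> x \<le> -1 then
       (let k = nat (- x) in
         (2 * fact (2 * k - 2) / (fact (k - 1) * fact (k + 1))) *
         ((fact m) ^ 2 * fact (2 * m - 2 * k + 1) / ((fact (m - k)) ^ 2 * fact (2 * m + 1))))
     else 0)"

definition boundary_trans :: "nat \<Rightarrow> nat \<Rightarrow> real" where
  "boundary_trans m m' = step_prob m (int m' - int m)"

definition boundary_chain :: "'a measure \<Rightarrow> (nat \<Rightarrow> 'a \<Rightarrow> nat) \<Rightarrow> nat \<Rightarrow> bool" where
  "boundary_chain P M m0 \<longleftrightarrow>
     prob_space P \<and>
     (\<forall>n. M n \<in> measurable P (count_space UNIV)) \<and>
     measure P {\<omega> \<in> space P. M 0 \<omega> = m0} = 1 \<and>
     (\<forall>n xs y. length xs = Suc n \<longrightarrow>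
        measure P {\<omega> \<in> space P. (\<forall>i\<le>n. M i \<omega> = xs ! i) \<and> M (Suc n) \<omega> = y}
        = measure P {\<omega> \<in> space P. \<forall>i\<le>n. M i \<omega> = xs ! i} * boundary_trans (xs ! n) y)"

end

theory Submission
  imports Defs
begin


fun tt :: "nat \<Rightarrow> real" where
  "tt 0 = 1"
| "tt (Suc n) = tt n * (2 * real n + 1) / (2 * real n + 2)"

lemma tt_pos: "tt n > 0"
  by (induction n) auto

lemma fact_tt: "fact (2*n) = 4^n * tt n * (fact n)^2"
proof (induction n)
  case 0 then show ?case by simp
next
  case (Suc n)
  have "fact (2 * Suc n) = (2*real n+2)*(2*real n+1) * (fact (2*n) :: real)"
    by (simp add: fact_Suc algebra_simps)
  also have "\<dots> = 4 ^ Suc n * tt (Suc n) * (fact (Suc n))^2"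
    using Suc by (simp add: fact_Suc field_simps power2_eq_square)
  finally show ?case .
qed

lemma fact_tt1: "fact (2*n+1) = (2*real n+1) * 4^n * tt n * (fact n)^2"
  using fact_tt[of n] by (simp add: fact_Suc algebra_simps)

definition FF :: "nat \<Rightarrow> real" where
  "FF y = real y * (real y + 1) / ((2 * real y + 1) * tt y)"

definition aa :: "nat \<Rightarrow> real" where
  "aa j = tt j / (2 * ((real j + 1) * (real j + 2)))"

lemma aux_cancel:
  fixes J X Y a b c p :: real
  assumes "J > 0" "X > 0" "Y > 0"
  shows "2*(a*J^2)/(J*(p*J)) * (X^2*(b*Y^2)/(Y^2*(c*X^2))) = 2*a/p * (b/c)"
  using assms by (simp add: field_simps power2_eq_square)

lemma step_down:
  "step_prob (y+j+1) (-(int j + 1)) * FF y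
     = aa j * real y * (real y + 1) / ((2 * real (y+j+1) + 1) * tt (y+j+1))"
proof -
  have k: "nat (- (- (int j + 1))) = j+1" by simp
  have e1: "2 * (y+j+1) - 2 * (j+1) + 1 = 2*y+1" by simp
  have e2: "y+j+1 - (j+1) = y" by simp
  have e3: "2*(j+1) - 2 = 2*j" by simp
  have f2: "(fact (j+2) :: real) = ((real j+1)*(real j+2)) * fact j"
    by (simp add: fact_Suc numeral_2_eq_2 algebra_simps)
  have "step_prob (y+j+1) (-(int j + 1)) =
     (2 * fact (2*j) / (fact j * fact (j + 2))) *
         ((fact (y+j+1)) ^ 2 * fact (2*y+1) / ((fact y) ^ 2 * fact (2 * (y+j+1) + 1)))"
    unfolding step_prob_def using k e1 e2 e3 by (simp add: Let_def)
  also have "\<dots> = (2 * (4^j * tt j * (fact j)^2) / (fact j * (((real j+1)*(real j+2)) * fact j))) *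
         ((fact (y+j+1)) ^ 2 * (((2*real y+1) * 4^y * tt y) * (fact y)^2) /
           ((fact y) ^ 2 * (((2*real (y+j+1)+1) * 4^(y+j+1) * tt (y+j+1)) * (fact (y+j+1))^2)))"
    by (simp only: fact_tt fact_tt1 f2)
  also have "\<dots> = 2 * (4^j * tt j) / ((real j+1)*(real j+2)) *
         (((2*real y+1) * 4^y * tt y) / ((2*real (y+j+1)+1) * 4^(y+j+1) * tt (y+j+1)))"
    by (rule aux_cancel) auto
  finally have eq: "step_prob (y+j+1) (-(int j + 1)) = \<dots>" .
  have pw: "(4::real)^(y+j+1) = 4^j * 4^y * 4" by (simp add: power_add)
  have p: "tt y > 0" "tt (y+j+1) > 0" "tt j > 0" using tt_pos by auto
  show ?thesis
  proof -
    define D where "D = (real j+1)*(real j+2)"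
    define V where "V = 2*real y+1"
    define W where "W = 2*real (y+j+1)+1"
    define Tz where "Tz = tt (y+j+1)"
    have pos: "D > 0" "V > 0" "W > 0" "Tz > 0" unfolding D_def V_def W_def Tz_def using p by auto
    show ?thesis
      unfolding eq FF_def aa_def pw D_def[symmetric] V_def[symmetric] W_def[symmetric] Tz_def[symmetric]
      using pos p by (simp add: field_simps del: tt.simps)
  qed
qed

lemma A_closed: "(\<Sum>j<m. aa j) = 1/3 - tt m / (3 * (real m + 1))"
proof (induction m)
  case 0 then show ?case by simp
next
  case (Suc m)
  have "(\<Sum>j<Suc m. aa j) = (\<Sum>j<m. aa j) + aa m" by simp
  also have "\<dots> = 1/3 - tt m / (3 * (real m + 1)) + tt m / (2 * (real m + 1) * (real m + 2))"
    unfolding Suc.IH by (simp add: aa_def)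
  also have "\<dots> = 1/3 - tt (Suc m) / (3 * (real (Suc m) + 1))"
    by (simp add: divide_simps) (simp add: algebra_simps)
  finally show ?case .
qed

lemma H_closed: "(\<Sum>j<m. aa j * (real m - real j)) = (real m - 1)/3 + 2/3 * tt (Suc m)"
proof (induction m)
  case 0 then show ?case by simp
next
  case (Suc m)
  have "(\<Sum>j<Suc m. aa j * (real (Suc m) - real j)) = (\<Sum>j<Suc m. aa j * (real m - real j) + aa j)"
    by (rule sum.cong) (auto simp: algebra_simps)
  also have "\<dots> = (\<Sum>j<Suc m. aa j * (real m - real j)) + (\<Sum>j<Suc m. aa j)"
    by (simp only: sum.distrib)
  also have "(\<Sum>j<Suc m. aa j * (real m - real j)) = (\<Sum>j<m. aa j * (real m - real j))"
    by simp
  also have "(\<Sum>j<m. aa j * (real m - real j)) + (\<Sum>j<Suc m. aa j) =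
     ((real m - 1)/3 + 2/3 * tt (Suc m)) + (1/3 - tt (Suc m) / (3 * (real (Suc m) + 1)))"
    unfolding Suc.IH A_closed ..
  also have "\<dots> = (real (Suc m) - 1)/3 + 2/3 * tt (Suc (Suc m))"
    by (simp add: divide_simps) (simp add: algebra_simps)
  finally show ?case .
qed

lemma G_closed: "(\<Sum>j<m. aa j * (real m - real j - 1) * (real m - real j))
   = (real m + 1) * (real m - 4) / 3 + 4/3 * (2 * real m + 1) * tt m"
proof (induction m)
  case 0 then show ?case by simp
next
  case (Suc m)
  have "(\<Sum>j<Suc m. aa j * (real (Suc m) - real j - 1) * (real (Suc m) - real j)) =
     (\<Sum>j<m. aa j * (real m - real j - 1) * (real m - real j) + 2 * (aa j * (real m - real j)))"
    by (simp add: algebra_simps)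
  also have "\<dots> = (\<Sum>j<m. aa j * (real m - real j - 1) * (real m - real j)) + 2 * (\<Sum>j<m. aa j * (real m - real j))"
    by (simp only: sum.distrib sum_distrib_left)
  also have "\<dots> = ((real m + 1) * (real m - 4) / 3 + 4/3 * (2 * real m + 1) * tt m) + 2 * ((real m - 1)/3 + 2/3 * tt (Suc m))"
    unfolding Suc.IH H_closed ..
  also have "\<dots> = (real (Suc m) + 1) * (real (Suc m) - 4) / 3 + 4/3 * (2 * real (Suc m) + 1) * tt (Suc m)"
    by (simp add: divide_simps) (simp add: algebra_simps)
  finally show ?case .
qed

lemma drift_down:
  "(\<Sum>y<m. boundary_trans m y * FF y)
     = (\<Sum>j<m. aa j * (real m - real j - 1) * (real m - real j)) / ((2 * real m + 1) * tt m)"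
proof -
  have "(\<Sum>y<m. boundary_trans m y * FF y) = (\<Sum>j<m. boundary_trans m (m - Suc j) * FF (m - Suc j))"
    by (rule sum.nat_diff_reindex[symmetric])
  also have "\<dots> = (\<Sum>j<m. aa j * (real m - real j - 1) * (real m - real j) / ((2 * real m + 1) * tt m))"
  proof (rule sum.cong)
    fix j assume "j \<in> {..<m}"
    then have jm: "j < m" by simp
    define y where "y = m - Suc j"
    have m: "m = y + j + 1" using jm unfolding y_def by simp
    have x: "int y - int m = -(int j + 1)" using m by simp
    have "boundary_trans m y * FF y = step_prob (y+j+1) (-(int j + 1)) * FF y"
      unfolding boundary_trans_def x using m by simp
    also have "\<dots> = aa j * real y * (real y + 1) / ((2 * real (y+j+1) + 1) * tt (y+j+1))"
      by (rule step_down)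
    also have "\<dots> = aa j * (real m - real j - 1) * (real m - real j) / ((2 * real m + 1) * tt m)"
      using m by (simp add: algebra_simps)
    finally show "boundary_trans m (m - Suc j) * FF (m - Suc j) = \<dots>" unfolding y_def .
  qed simp
  also have "\<dots> = (\<Sum>j<m. aa j * (real m - real j - 1) * (real m - real j)) / ((2 * real m + 1) * tt m)"
    by (simp add: sum_divide_distrib)
  finally show ?thesis .
qed

lemma drift:
  "(\<Sum>y\<le>Suc m. boundary_trans m y * FF y) = FF m + 4/3"
proof -
  have sp: "{..Suc m} = insert (Suc m) (insert m {..<m})" by auto
  have t0: "boundary_trans m m = 0" unfolding boundary_trans_def step_prob_def by simp
  have t1: "boundary_trans m (Suc m) = (2 * real m + 3) / (3 * real m + 3)"
    unfolding boundary_trans_def step_prob_def by simp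
  have "(\<Sum>y\<le>Suc m. boundary_trans m y * FF y) =
      boundary_trans m (Suc m) * FF (Suc m) + (\<Sum>y<m. boundary_trans m y * FF y)"
    unfolding sp using t0 by simp
  also have "\<dots> = (2 * real m + 3) / (3 * real m + 3) * FF (Suc m) +
      ((real m + 1) * (real m - 4) / 3 + 4/3 * (2 * real m + 1) * tt m) / ((2 * real m + 1) * tt m)"
    unfolding t1 drift_down G_closed ..
  also have "\<dots> = FF m + 4/3"
  proof -
    have p: "tt m > 0" by (rule tt_pos)
    define T where "T = tt m"
    have e1: "FF (Suc m) = (real m + 1) * (real m + 2) / ((2 * real m + 3) * (T * (2 * real m + 1) / (2 * real m + 2)))"
      unfolding FF_def T_def by (simp add: algebra_simps)
    have e2: "FF m = real m * (real m + 1) / ((2 * real m + 1) * T)" unfolding FF_def T_def ..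
    have pT: "T > 0" using p T_def by simp
    show ?thesis unfolding T_def[symmetric] e1 e2 using pT
      by (simp add: divide_simps) (simp add: algebra_simps)
  qed
  finally show ?thesis .
qed

lemma tt_sq: "tt n ^ 2 * (2 * real n + 1) \<le> 1"
proof (induction n)
  case 0 then show ?case by simp
next
  case (Suc n)
  have "tt (Suc n) ^ 2 * (2 * real (Suc n) + 1) = (tt n ^ 2 * (2 * real n + 1)) *
      ((2 * real n + 1) * (2 * real n + 3) / (2 * real n + 2)^2)"
    by (simp add: power2_eq_square field_simps)
  also have "\<dots> \<le> 1 * 1"
  proof (rule mult_mono)
    have "(2 * real n + 1) * (2 * real n + 3) \<le> (2 * real n + 2)^2"
      by (simp add: power2_eq_square algebra_simps)
    moreover have "(2 * real n + 2)^2 > 0" by simp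
    ultimately show "(2 * real n + 1) * (2 * real n + 3) / (2 * real n + 2)^2 \<le> 1"
      by (simp add: divide_le_eq_1_pos)
  qed (use Suc in auto)
  finally show ?case by simp
qed

lemma FF_lower: "real y ^ 3 \<le> 2 * FF y ^ 2"
proof -
  have t: "tt y > 0" by (rule tt_pos)
  have "FF y ^ 2 = (real y * (real y + 1))^2 / ((2 * real y + 1)^2 * tt y ^ 2)"
    unfolding FF_def by (simp add: power_mult_distrib power_divide)
  also have "\<dots> \<ge> (real y * (real y + 1))^2 / (2 * real y + 1)"
  proof -
    have "(2 * real y + 1) * (tt y ^ 2 * (2 * real y + 1)) \<le> (2 * real y + 1) * 1"
      by (rule mult_left_mono[OF tt_sq]) simp
    then have "(2 * real y + 1)^2 * tt y ^ 2 \<le> (2 * real y + 1)"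
      by (simp add: power2_eq_square algebra_simps)
    moreover have "(2 * real y + 1)^2 * tt y ^ 2 > 0" using t by simp
    ultimately show ?thesis by (intro divide_left_mono) auto
  qed
  finally have "(real y * (real y + 1))^2 / (2 * real y + 1) \<le> FF y ^ 2" .
  moreover have "real y ^ 3 \<le> 2 * ((real y * (real y + 1))^2 / (2 * real y + 1))"
    by (simp add: field_simps power2_eq_square power3_eq_cube)
  ultimately show ?thesis by simp
qed



lemma FF_nonneg: "FF y \<ge> 0"
  unfolding FF_def using tt_pos[of y] by simp

lemma step_prob_nonneg: "step_prob m x \<ge> 0"
  unfolding step_prob_def Let_def by (auto intro!: divide_nonneg_nonneg mult_nonneg_nonneg)

lemma trans_nonneg: "boundary_trans m y \<ge> 0"
  unfolding boundary_trans_def by (rule step_prob_nonneg)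

lemma trans_big: "y > Suc m \<Longrightarrow> boundary_trans m y = 0"
  unfolding boundary_trans_def step_prob_def by auto

locale bchain =
  fixes P :: "'a measure" and M :: "nat \<Rightarrow> 'a \<Rightarrow> nat" and m0 :: nat
  assumes bc: "boundary_chain P M m0"
begin

sublocale prob_space P using bc unfolding boundary_chain_def by auto

lemma Mmeas[measurable]: "M i \<in> measurable P (count_space UNIV)"
  using bc unfolding boundary_chain_def by auto

lemma FFM_meas[measurable]: "(\<lambda>\<omega>. FF (M i \<omega>)) \<in> borel_measurable P"
  by (rule measurable_compose[OF Mmeas]) simp

definition pre :: "nat \<Rightarrow> nat list \<Rightarrow> 'a set" where
  "pre n xs = {\<omega> \<in> space P. \<forall>i\<le>n. M i \<omega> = xs ! i}"

definition hit :: "nat \<Rightarrow> nat \<Rightarrow> real \<Rightarrow> 'a set" where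
  "hit n j V = {\<omega> \<in> space P. \<exists>i. n \<le> i \<and> i \<le> n + j \<and> FF (M i \<omega>) \<ge> V}"

lemma pre_sets[measurable]: "pre n xs \<in> sets P"
  unfolding pre_def by measurable

lemma hit_sets[measurable]: "hit n j V \<in> sets P"
proof -
  have "hit n j V = (\<Union>i\<in>{n..n+j}. {\<omega> \<in> space P. FF (M i \<omega>) \<ge> V})"
    unfolding hit_def by auto
  also have "\<dots> \<in> sets P" by measurable
  finally show ?thesis .
qed

lemma trans_eq:
  assumes "length xs = Suc n"
  shows "measure P {\<omega> \<in> space P. (\<forall>i\<le>n. M i \<omega> = xs ! i) \<and> M (Suc n) \<omega> = y}
     = measure P (pre n xs) * boundary_trans (xs ! n) y"
  using bc assms unfolding boundary_chain_def pre_def by blast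

lemma pre_snoc:
  assumes "length xs = Suc n"
  shows "pre (Suc n) (xs @ [y]) = {\<omega> \<in> space P. (\<forall>i\<le>n. M i \<omega> = xs ! i) \<and> M (Suc n) \<omega> = y}"
  unfolding pre_def using assms
  by (auto simp: nth_append le_Suc_eq)

lemma measure_pre_snoc:
  assumes "length xs = Suc n"
  shows "measure P (pre (Suc n) (xs @ [y])) = measure P (pre n xs) * boundary_trans (xs ! n) y"
  using trans_eq[OF assms] pre_snoc[OF assms] by simp

lemma sum_trans_le:
  assumes "length xs = Suc n" "finite Y"
  shows "measure P (pre n xs) * (\<Sum>y\<in>Y. boundary_trans (xs ! n) y) \<le> measure P (pre n xs)"
proof -
  have "measure P (pre n xs) * (\<Sum>y\<in>Y. boundary_trans (xs ! n) y)
      = (\<Sum>y\<in>Y. measure P (pre (Suc n) (xs @ [y])))"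
    using measure_pre_snoc[OF assms(1)] by (simp add: sum_distrib_left)
  also have "\<dots> = measure P (\<Union>y\<in>Y. pre (Suc n) (xs @ [y]))"
  proof (rule finite_measure_finite_Union[symmetric])
    show "finite Y" by fact
    show "(\<lambda>y. pre (Suc n) (xs @ [y])) ` Y \<subseteq> sets P" by auto
    show "disjoint_family_on (\<lambda>y. pre (Suc n) (xs @ [y])) Y"
      unfolding disjoint_family_on_def pre_snoc[OF assms(1)] by auto
  qed
  also have "\<dots> \<le> measure P (pre n xs)"
    by (rule finite_measure_mono) (use assms(1) in \<open>auto simp: pre_def nth_append\<close>)
  finally show ?thesis .
qed

lemma null_jump:
  assumes "length xs = Suc n"
  shows "{\<omega> \<in> pre n xs. M (Suc n) \<omega> > Suc (xs ! n)} \<in> null_sets P"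
proof -
  have "{\<omega> \<in> pre n xs. M (Suc n) \<omega> > Suc (xs ! n)} =
     (\<Union>y\<in>{y. y > Suc (xs ! n)}. {\<omega> \<in> space P. (\<forall>i\<le>n. M i \<omega> = xs ! i) \<and> M (Suc n) \<omega> = y})"
    unfolding pre_def by auto
  also have "\<dots> \<in> null_sets P"
  proof (rule null_sets_UN')
    fix y assume "y \<in> {y. y > Suc (xs ! n)}"
    then have "measure P {\<omega> \<in> space P. (\<forall>i\<le>n. M i \<omega> = xs ! i) \<and> M (Suc n) \<omega> = y} = 0"
      using trans_eq[OF assms] trans_big by simp
    moreover have "{\<omega> \<in> space P. (\<forall>i\<le>n. M i \<omega> = xs ! i) \<and> M (Suc n) \<omega> = y} \<in> sets P"
      by measurable
    ultimately show "{\<omega> \<in> space P. (\<forall>i\<le>n. M i \<omega> = xs ! i) \<and> M (Suc n) \<omega> = y} \<in> null_sets P"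
      by (simp add: emeasure_eq_measure null_setsI)
  qed simp
  finally show ?thesis .
qed

lemma hit_big:
  assumes "V > 0" "FF (xs ! n) \<ge> V"
  shows "measure P (pre n xs \<inter> hit n j V) \<le> measure P (pre n xs) * (FF (xs!n) + 4/3 * real j) / V"
proof -
  have "measure P (pre n xs \<inter> hit n j V) \<le> measure P (pre n xs)"
    by (rule finite_measure_mono) auto
  also have "\<dots> \<le> measure P (pre n xs) * ((FF (xs!n) + 4/3 * real j) / V)"
  proof -
    have "1 \<le> (FF (xs!n) + 4/3 * real j) / V" using assms by (simp add: field_simps)
    then show ?thesis using measure_nonneg[of P "pre n xs"]
      by (metis mult.right_neutral mult_left_mono)
  qed
  finally show ?thesis by simp
qed

lemma hit_bound:
  assumes V: "V > 0"
  shows "length xs = Suc n \<Longrightarrow>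
    measure P (pre n xs \<inter> hit n j V) \<le> measure P (pre n xs) * (FF (xs!n) + 4/3 * real j) / V"
proof (induction j arbitrary: n xs)
  case 0
  show ?case
  proof (cases "FF (xs ! n) \<ge> V")
    case True then show ?thesis using hit_big[OF V] by blast
  next
    case False
    then have "pre n xs \<inter> hit n 0 V = {}" unfolding pre_def hit_def by auto
    then show ?thesis using V FF_nonneg[of "xs!n"] by simp
  qed
next
  case (Suc j)
  show ?case
  proof (cases "FF (xs ! n) \<ge> V")
    case True then show ?thesis using hit_big[OF V] by blast
  next
    case False
    define m where "m = xs ! n"
    define A where "A = (\<lambda>y. pre (Suc n) (xs @ [y]) \<inter> hit (Suc n) j V)"
    define Nl where "Nl = {\<omega> \<in> pre n xs. M (Suc n) \<omega> > Suc (xs ! n)}"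
    have Nl: "Nl \<in> null_sets P" unfolding Nl_def by (rule null_jump[OF Suc.prems])
    have len: "length (xs @ [y]) = Suc (Suc n)" for y using Suc.prems by simp
    have sub: "pre n xs \<inter> hit n (Suc j) V \<subseteq> (\<Union>y\<in>{..Suc m}. A y) \<union> Nl"
    proof
      fix \<omega> assume w: "\<omega> \<in> pre n xs \<inter> hit n (Suc j) V"
      then obtain i where i: "n \<le> i" "i \<le> n + Suc j" "FF (M i \<omega>) \<ge> V" and sp: "\<omega> \<in> space P"
        unfolding hit_def by auto
      have Mn: "M n \<omega> = xs ! n" using w unfolding pre_def by auto
      have "i \<noteq> n" using i(3) False Mn by auto
      then have "Suc n \<le> i" using i(1) by simp
      then have hitw: "\<omega> \<in> hit (Suc n) j V" using i sp unfolding hit_def by auto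
      show "\<omega> \<in> (\<Union>y\<in>{..Suc m}. A y) \<union> Nl"
      proof (cases "M (Suc n) \<omega> \<le> Suc m")
        case True
        have "\<omega> \<in> pre (Suc n) (xs @ [M (Suc n) \<omega>])"
          unfolding pre_snoc[OF Suc.prems] using w sp unfolding pre_def by auto
        then show ?thesis using True hitw unfolding A_def by auto
      next
        case False
        then show ?thesis using w unfolding Nl_def m_def by auto
      qed
    qed
    have "measure P (pre n xs \<inter> hit n (Suc j) V) \<le> measure P ((\<Union>y\<in>{..Suc m}. A y) \<union> Nl)"
      by (rule finite_measure_mono[OF sub]) (use Nl in \<open>auto simp: A_def null_sets_def\<close>)
    also have "\<dots> = measure P (\<Union>y\<in>{..Suc m}. A y)"
      by (rule measure_Un_null_set[OF _ Nl]) (auto simp: A_def)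
    also have "\<dots> \<le> (\<Sum>y\<in>{..Suc m}. measure P (A y))"
      by (rule finite_measure_subadditive_finite) (auto simp: A_def)
    also have "\<dots> \<le> (\<Sum>y\<in>{..Suc m}. measure P (pre (Suc n) (xs @ [y])) * (FF y + 4/3 * real j) / V)"
    proof (rule sum_mono)
      fix y
      show "measure P (A y) \<le> measure P (pre (Suc n) (xs @ [y])) * (FF y + 4/3 * real j) / V"
        using Suc.IH[OF len[of y]] Suc.prems unfolding A_def by (simp add: nth_append)
    qed
    also have "\<dots> = (\<Sum>y\<in>{..Suc m}. measure P (pre n xs) * boundary_trans m y * (FF y + 4/3 * real j) / V)"
      unfolding measure_pre_snoc[OF Suc.prems] m_def ..
    also have "\<dots> = (\<Sum>y\<in>{..Suc m}. measure P (pre n xs) / V * (boundary_trans m y * FF y)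
        + (measure P (pre n xs) * boundary_trans m y) * (4/3 * real j) / V)"
      by (rule sum.cong) (simp_all add: add_divide_distrib algebra_simps)
    also have "\<dots> = (\<Sum>y\<in>{..Suc m}. measure P (pre n xs) / V * (boundary_trans m y * FF y))
        + (\<Sum>y\<in>{..Suc m}. (measure P (pre n xs) * boundary_trans m y) * (4/3 * real j) / V)"
      by (rule sum.distrib)
    also have "\<dots> = measure P (pre n xs) / V * (\<Sum>y\<le>Suc m. boundary_trans m y * FF y)
        + (measure P (pre n xs) * (\<Sum>y\<le>Suc m. boundary_trans m y)) * (4/3 * real j) / V"
      by (simp only: sum_distrib_left[symmetric] sum_divide_distrib[symmetric] sum_distrib_right[symmetric])
    also have "\<dots> \<le> measure P (pre n xs) / V * (FF m + 4/3) + measure P (pre n xs) * (4/3 * real j) / V"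
    proof -
      have "(measure P (pre n xs) * (\<Sum>y\<le>Suc m. boundary_trans m y)) * (4/3 * real j) / V
          \<le> measure P (pre n xs) * (4/3 * real j) / V"
        using sum_trans_le[OF Suc.prems, of "{..Suc m}"] V unfolding m_def
        by (intro divide_right_mono mult_right_mono) auto
      then show ?thesis unfolding drift by simp
    qed
    also have "\<dots> = measure P (pre n xs) * (FF (xs!n) + 4/3 * real (Suc j)) / V"
      unfolding m_def by (simp add: algebra_simps add_divide_distrib)
    finally show ?thesis .
  qed
qed

lemma block:
  assumes V: "V > 0"
  shows "prob {\<omega>\<in>space P. \<exists>i\<le>N. FF (M i \<omega>) \<ge> V} \<le> (FF m0 + 4/3 * real N) / V"
proof -
  define Z where "Z = {\<omega>\<in>space P. M 0 \<omega> \<noteq> m0}"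
  have Zs: "Z \<in> sets P" unfolding Z_def by measurable
  have "prob (space P - Z) = 1"
  proof -
    have "space P - Z = {\<omega>\<in>space P. M 0 \<omega> = m0}" unfolding Z_def by auto
    then show ?thesis using bc unfolding boundary_chain_def by simp
  qed
  then have "prob Z = 0" using prob_compl[OF Zs] by simp
  then have Z: "Z \<in> null_sets P" using Zs by (simp add: emeasure_eq_measure null_setsI)
  have pre0: "pre 0 [m0] = {\<omega>\<in>space P. M 0 \<omega> = m0}" unfolding pre_def by auto
  have sub: "{\<omega>\<in>space P. \<exists>i\<le>N. FF (M i \<omega>) \<ge> V} \<subseteq> (pre 0 [m0] \<inter> hit 0 N V) \<union> Z"
    unfolding pre0 hit_def Z_def by auto
  have "prob {\<omega>\<in>space P. \<exists>i\<le>N. FF (M i \<omega>) \<ge> V} \<le> prob ((pre 0 [m0] \<inter> hit 0 N V) \<union> Z)"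
    by (rule finite_measure_mono[OF sub]) (use Zs in auto)
  also have "\<dots> = prob (pre 0 [m0] \<inter> hit 0 N V)"
    by (rule measure_Un_null_set[OF _ Z]) auto
  also have "\<dots> \<le> prob (pre 0 [m0]) * (FF ([m0]!0) + 4/3 * real N) / V"
    by (rule hit_bound[OF V]) simp
  also have "\<dots> \<le> (FF m0 + 4/3 * real N) / V"
  proof -
    have "prob (pre 0 [m0]) \<le> 1" by simp
    moreover have "0 \<le> (FF m0 + 4/3 * real N)" using FF_nonneg[of m0] by simp
    ultimately show ?thesis using V
      by (simp add: divide_right_mono mult_left_le_one_le)
  qed
  finally show ?thesis .
qed

end


lemma ratio_bound:
  fixes x n j :: nat
  assumes x3: "real x ^ 3 \<le> 2 * 4^j * (real j + 1)^3" and jn: "2^j \<le> n" and j1: "j \<ge> 1"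
  shows "real x / (real n powr (2/3) * ln (real n)) \<le> 16 / (ln 2)^3 + 1"
proof -
  have n2: "real n \<ge> 2"
  proof -
    have "(2::nat) ^ 1 \<le> 2 ^ j" using j1 by (intro power_increasing) auto
    then show ?thesis using jn by (metis numeral_le_real_of_nat_iff order_trans power_one_right)
  qed
  define L where "L = ln (real n)"
  have L: "L > 0" unfolding L_def using n2 by simp
  define N where "N = real n powr (2/3)"
  have N: "N > 0" unfolding N_def using n2 by simp
  have N3: "N ^ 3 = real n ^ 2"
  proof -
    have "N ^ 3 = real n powr (of_nat 3 * (2/3))" unfolding N_def
      by (rule powr_power) (use n2 in auto)
    also have "(of_nat 3 * (2/3) :: real) = 2" by simp
    finally show ?thesis using n2 by simp
  qed
  have l2: "ln (2::real) > 0" by simp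
  have jL: "real j * ln 2 \<le> L"
  proof -
    have "real j * ln 2 = ln ((2::real) ^ j)" by (simp add: ln_realpow)
    also have "\<dots> \<le> L" unfolding L_def using jn n2
      by (subst ln_le_cancel_iff) (auto simp del: of_nat_power simp: of_nat_power[symmetric])
    finally show ?thesis .
  qed
  have j1L: "(real j + 1) * ln 2 \<le> 2 * L"
  proof -
    have "(real j + 1) * ln 2 \<le> (2 * real j) * ln 2"
      by (rule mult_right_mono) (use j1 l2 in auto)
    then show ?thesis using jL by linarith
  qed
  have 4: "(4::real)^j \<le> real n ^ 2"
  proof -
    have "(4::real)^j = (2^j)^2" by (simp add: power2_eq_square power_mult_distrib[symmetric])
    also have "\<dots> \<le> real n ^ 2" using jn
      by (intro power_mono) (auto simp del: of_nat_power simp: of_nat_power[symmetric])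
    finally show ?thesis .
  qed
  have "real x ^ 3 * (ln 2)^3 \<le> 2 * 4^j * ((real j + 1) * ln 2)^3"
    using x3 l2 by (simp add: power_mult_distrib)
  also have "\<dots> \<le> 2 * real n ^ 2 * (2 * L)^3"
  proof -
    have p3: "((real j + 1) * ln 2)^3 \<le> (2 * L)^3"
      by (rule power_mono[OF j1L]) (use l2 in simp)
    have q: "2 * 4^j \<le> 2 * real n ^ 2" using 4 by simp
    show ?thesis by (rule mult_mono[OF q p3]) auto
  qed
  finally have A: "real x ^ 3 * (ln 2)^3 \<le> 16 * real n ^ 2 * L ^ 3" by (simp add: power_mult_distrib)
  define r where "r = real x / (N * L)"
  have r0: "r \<ge> 0" unfolding r_def using N L by simp
  have "r ^ 3 = real x ^ 3 / (real n ^ 2 * L ^ 3)"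
    unfolding r_def using N3 by (simp add: power_divide power_mult_distrib)
  also have "\<dots> \<le> 16 / (ln 2)^3"
  proof -
    define D where "D = real n ^ 2 * L ^ 3"
    define l3 where "l3 = (ln (2::real))^3"
    have D: "D > 0" unfolding D_def using L n2 by simp
    have l3: "l3 > 0" unfolding l3_def using l2 by simp
    have "real x ^ 3 * l3 \<le> 16 * D" using A unfolding D_def l3_def by (simp add: mult.assoc)
    then have "real x ^ 3 \<le> 16 * D / l3" using l3 by (simp add: pos_le_divide_eq)
    then have "real x ^ 3 \<le> 16 / l3 * D" by simp
    then have "real x ^ 3 / D \<le> 16 / l3" using D by (simp add: pos_divide_le_eq)
    then show ?thesis unfolding D_def l3_def .
  qed
  finally have r3: "r ^ 3 \<le> 16 / (ln 2)^3" .
  have "r \<le> 16 / (ln 2)^3 + 1"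
  proof (cases "r \<le> 1")
    case True
    have "16 / (ln 2)^3 \<ge> (0::real)" using l2 by simp
    then show ?thesis using True by linarith
  next
    case False
    have "1 * 1 \<le> r * r" by (rule mult_mono) (use False in auto)
    then have "1 \<le> r * r" by simp
    then have "r * 1 \<le> r * (r * r)" by (rule mult_left_mono) (use r0 in auto)
    then have "r \<le> r ^ 3" by (simp add: power3_eq_cube)
    then show ?thesis using r3 by simp
  qed
  then show ?thesis unfolding r_def N_def L_def .
qed

context bchain
begin

lemma main:
  "AE \<omega> in P. limsup (\<lambda>n. ereal (real (M n \<omega>) / (real n powr (2/3) * ln (real n)))) < \<infinity>"
proof -
  define V where "V j = 2^j * (real j + 1) * sqrt (real j + 1)" for j
  define A where "A j = {\<omega>\<in>space P. \<exists>i\<le>2^(Suc j). FF (M i \<omega>) \<ge> V j}" for j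
  define K where "K = FF m0 + 3"
  define C where "C = 16 / (ln 2)^3 + (1::real)"
  have Vpos: "V j > 0" for j unfolding V_def by simp
  have As[measurable]: "A j \<in> sets P" for j unfolding A_def by measurable
  have PA: "prob (A j) \<le> K * real (Suc j) powr (-3/2)" for j
  proof -
    have "prob (A j) \<le> (FF m0 + 4/3 * real (2^(Suc j))) / V j"
      unfolding A_def by (rule block[OF Vpos])
    also have "\<dots> \<le> K * 2^j / V j"
    proof (rule divide_right_mono)
      have "(1::real) \<le> 2^j" by simp
      then have "FF m0 \<le> FF m0 * 2^j" using FF_nonneg[of m0] by (simp add: mult_le_cancel_left1)
      then show "FF m0 + 4/3 * real (2^(Suc j)) \<le> K * 2^j" unfolding K_def
        using zero_le_power[of "2::real" j] by (simp add: algebra_simps; linarith)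
    qed (use Vpos in \<open>simp add: less_imp_le\<close>)
    also have "\<dots> = K / ((real j + 1) * sqrt (real j + 1))" unfolding V_def by simp
    also have "\<dots> = K * real (Suc j) powr (-3/2)"
    proof -
      have x: "real (Suc j) > 0" by simp
      have e: "(3/2::real) = 1 + 1/2" by simp
      have "real (Suc j) powr (3/2) = real (Suc j) powr 1 * real (Suc j) powr (1/2)"
        unfolding e by (rule powr_add)
      also have "\<dots> = real (Suc j) * sqrt (real (Suc j))"
        using x by (simp add: powr_half_sqrt)
      finally have p32: "real (Suc j) powr (3/2) = real (Suc j) * sqrt (real (Suc j))" .
      have m: "(-3/2::real) = -(3/2)" by simp
      have "real (Suc j) powr (-3/2) = inverse (real (Suc j) powr (3/2))"
        unfolding m by (rule powr_minus)
      also have "\<dots> = inverse ((real j + 1) * sqrt (real j + 1))"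
        unfolding p32 by (simp only: of_nat_Suc add.commute)
      finally have "real (Suc j) powr (-3/2) = inverse ((real j + 1) * sqrt (real j + 1))" .
      then show ?thesis by (simp only: divide_inverse)
    qed
    finally show ?thesis .
  qed
  have sum: "summable (\<lambda>j. prob (A j))"
  proof (rule summable_comparison_test')
    have "summable (\<lambda>n. real n powr (-3/2))" by (simp add: summable_real_powr_iff)
    then have "summable (\<lambda>n. real (Suc n) powr (-3/2))" by (subst summable_Suc_iff)
    then show "summable (\<lambda>j. K * real (Suc j) powr (-3/2))" by (rule summable_mult)
    show "norm (prob (A j)) \<le> K * real (Suc j) powr (-3/2)" for j using PA[of j] by simp
  qed
  have BC: "AE \<omega> in P. eventually (\<lambda>j. \<omega> \<in> space P - A j) sequentially"
    by (rule borel_cantelli_AE1[OF As _ sum]) (simp add: emeasure_eq_measure)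
  have pt: "limsup (\<lambda>n. ereal (real (M n \<omega>) / (real n powr (2/3) * ln (real n)))) < \<infinity>"
    if sp: "\<omega> \<in> space P" and ev: "eventually (\<lambda>j. \<omega> \<in> space P - A j) sequentially" for \<omega>
  proof -
    obtain J where J: "\<And>j. j \<ge> J \<Longrightarrow> \<omega> \<notin> A j" using ev unfolding eventually_sequentially by auto
    define J1 where "J1 = max J 1"
    have "eventually (\<lambda>n. ereal (real (M n \<omega>) / (real n powr (2/3) * ln (real n))) \<le> ereal C) sequentially"
    proof (rule eventually_sequentiallyI[of "2 ^ J1"])
      fix n :: nat assume n: "2 ^ J1 \<le> n"
      have n1: "n \<ge> 1" using n by (metis le_trans one_le_power one_le_numeral)
      obtain j where j: "2^j \<le> n" "n < 2^(j+1)" using ex_power_ivl1[of 2 n] n1 by auto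
      have jJ: "j \<ge> J1"
      proof (rule ccontr)
        assume "\<not> j \<ge> J1"
        then have "j + 1 \<le> J1" by simp
        then have "(2::nat)^(j+1) \<le> 2^J1" by (rule power_increasing) simp
        then show False using j n by simp
      qed
      then have "\<omega> \<notin> A j" using J unfolding J1_def by simp
      moreover have "n \<le> 2^(Suc j)" using j by simp
      ultimately have FFl: "FF (M n \<omega>) < V j" using sp unfolding A_def by auto
      have "real (M n \<omega>) ^ 3 \<le> 2 * FF (M n \<omega>) ^ 2" by (rule FF_lower)
      also have "\<dots> \<le> 2 * V j ^ 2"
        using FFl FF_nonneg[of "M n \<omega>"] by (simp add: power_mono)
      also have "V j ^ 2 = 4^j * (real j + 1)^3"
      proof -
        have "V j ^ 2 = ((2::real)^j)^2 * (real j + 1)^2 * (sqrt (real j + 1))^2"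
          unfolding V_def by (simp only: power_mult_distrib)
        also have "(sqrt (real j + 1))^2 = real j + 1" by simp
        also have "((2::real)^j)^2 = 4^j"
          by (simp add: power2_eq_square power_mult_distrib[symmetric])
        finally show ?thesis by (simp add: power2_eq_square power3_eq_cube)
      qed
      finally have x3: "real (M n \<omega>) ^ 3 \<le> 2 * 4^j * (real j + 1)^3" by simp
      have "real (M n \<omega>) / (real n powr (2/3) * ln (real n)) \<le> C"
        unfolding C_def by (rule ratio_bound[OF x3 j(1)]) (use jJ in \<open>simp add: J1_def\<close>)
      then show "ereal (real (M n \<omega>) / (real n powr (2/3) * ln (real n))) \<le> ereal C" by simp
    qed
    then have "limsup (\<lambda>n. ereal (real (M n \<omega>) / (real n powr (2/3) * ln (real n)))) \<le> ereal C"
      by (rule Limsup_bounded)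
    moreover have "ereal C < \<infinity>" by simp
    ultimately show ?thesis by (rule le_less_trans)
  qed
  show ?thesis
    using BC AE_space by eventually_elim (use pt in blast)
qed

end


theorem theorem3p2:
  fixes P :: "'a measure" and M :: "nat \<Rightarrow> 'a \<Rightarrow> nat" and m0 :: nat
  assumes "boundary_chain P M m0"
  shows "AE \<omega> in P. limsup (\<lambda>n. ereal (real (M n \<omega>) / (real n powr (2/3) * ln (real n)))) < \<infinity>"
proof -
  interpret bchain P M m0 by (rule bchain.intro) (rule assms)
  show ?thesis by (rule main)
qed

end
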